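(* Let $F_1=e^{i(\alpha+\beta)}+e^{i\gamma}$, $F_2=-e^{i\beta}+e^{i(\alpha+\gamma)}$, $F_3=-e^{i\alpha}+e^{i(\beta+\gamma)}$, $F_4=-1+e^{i(\alpha+\beta+\gamma)}$, and $f_k=|F_k(\alpha,\beta,\gamma)|^2$ for $1\le k\le4$. Then each $f_k$ is extremal in the class $Q(1,1,1)$.
   Context: $\sigma(1,1,1)$ is the set of trigonometric polynomials $f(\alpha,\beta,\gamma)=\sum_{|k|,|\ell|,|m|\le1}q(k,\ell,m)e^{i(k\alpha+\ell\beta+m\gamma)}$ with $f\ge0$ for all real $\alpha,\beta,\gamma$; $Q(1,1,1)$ is the set of $f\in\sigma(1,1,1)$ of the form $f=\sum_{j=1}^r|F_j|^2$ with $F_j=\sum_{k,\ell,m\in\{0,1\}}q_j(k,\ell,m)e^{i(k\alpha+\ell\beta+m\gamma)}$. An element $f$ of a convex cone $U$ is called extremal in $U$ if whenever $f=g+h$ with $g,h\in U$, both $g$ and $h$ are nonnegative multiples of $f$. *)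

theory Defs
  imports Complex_Main
begin

definition hpoly :: "(nat \<Rightarrow> nat \<Rightarrow> nat \<Rightarrow> complex) \<Rightarrow> real \<Rightarrow> real \<Rightarrow> real \<Rightarrow> complex" where
  "hpoly p \<alpha> \<beta> \<gamma> =
     (\<Sum>k\<in>{0,1}. \<Sum>l\<in>{0,1}. \<Sum>m\<in>{0,1}.
        p k l m * exp (\<i> * complex_of_real (real k * \<alpha> + real l * \<beta> + real m * \<gamma>)))"

definition Q111 :: "(real \<Rightarrow> real \<Rightarrow> real \<Rightarrow> real) set" where
  "Q111 = {f. \<exists>(r::nat) (ps :: nat \<Rightarrow> nat \<Rightarrow> nat \<Rightarrow> nat \<Rightarrow> complex).
              f = (\<lambda>\<alpha> \<beta> \<gamma>. \<Sum>j<r. (cmod (hpoly (ps j) \<alpha> \<beta> \<gamma>))\<^sup>2)}"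

definition extremal_in :: "(real \<Rightarrow> real \<Rightarrow> real \<Rightarrow> real) \<Rightarrow> (real \<Rightarrow> real \<Rightarrow> real \<Rightarrow> real) set \<Rightarrow> bool" where
  "extremal_in f U \<longleftrightarrow> f \<in> U \<and>
     (\<forall>g\<in>U. \<forall>h\<in>U. f = (\<lambda>\<alpha> \<beta> \<gamma>. g \<alpha> \<beta> \<gamma> + h \<alpha> \<beta> \<gamma>) \<longrightarrow>
        (\<exists>c\<ge>0. g = (\<lambda>\<alpha> \<beta> \<gamma>. c * f \<alpha> \<beta> \<gamma>)) \<and> (\<exists>d\<ge>0. h = (\<lambda>\<alpha> \<beta> \<gamma>. d * f \<alpha> \<beta> \<gamma>)))"

definition F1 :: "real \<Rightarrow> real \<Rightarrow> real \<Rightarrow> complex" where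
  "F1 \<alpha> \<beta> \<gamma> = exp (\<i> * complex_of_real (\<alpha> + \<beta>)) + exp (\<i> * complex_of_real \<gamma>)"
definition F2 :: "real \<Rightarrow> real \<Rightarrow> real \<Rightarrow> complex" where
  "F2 \<alpha> \<beta> \<gamma> = - exp (\<i> * complex_of_real \<beta>) + exp (\<i> * complex_of_real (\<alpha> + \<gamma>))"
definition F3 :: "real \<Rightarrow> real \<Rightarrow> real \<Rightarrow> complex" where
  "F3 \<alpha> \<beta> \<gamma> = - exp (\<i> * complex_of_real \<alpha>) + exp (\<i> * complex_of_real (\<beta> + \<gamma>))"
definition F4 :: "real \<Rightarrow> real \<Rightarrow> real \<Rightarrow> complex" where
  "F4 \<alpha> \<beta> \<gamma> = - 1 + exp (\<i> * complex_of_real (\<alpha> + \<beta> + \<gamma>))"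

end

theory Submission
  imports Defs
begin


lemma hpoly_alt: "hpoly p a b c =
  p 0 0 0 + p 1 0 0 * exp (\<i>*a) + p 0 1 0 * exp (\<i>*b) + p 0 0 1 * exp (\<i>*c)
  + p 1 1 0 * exp (\<i>*a) * exp (\<i>*b) + p 1 0 1 * exp (\<i>*a) * exp (\<i>*c)
  + p 0 1 1 * exp (\<i>*b) * exp (\<i>*c) + p 1 1 1 * exp (\<i>*a) * exp (\<i>*b) * exp (\<i>*c)"
  unfolding hpoly_def by (simp add: distrib_left exp_add algebra_simps)

lemma ang: "x \<in> {1,-1,\<i>} \<Longrightarrow> \<exists>t::real. exp (\<i> * complex_of_real t) = x"
proof -
  assume "x \<in> {1,-1,\<i>}"
  moreover have "exp (\<i> * complex_of_real 0) = 1" by simp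
  moreover have "exp (\<i> * complex_of_real pi) = -1" by (simp flip: cis_conv_exp)
  moreover have "exp (\<i> * complex_of_real (pi/2)) = \<i>"
  proof -
    have "cis (pi/2) = \<i>" by (simp add: complex_eq_iff)
    then show ?thesis by (simp add: cis_conv_exp)
  qed
  ultimately show ?thesis by blast
qed

lemma V3: fixes a b c :: complex
  assumes "\<And>x. x \<in> {1,-1,\<i>} \<Longrightarrow> a + b*x + c*x^2 = 0"
  shows "a = 0 \<and> b = 0 \<and> c = 0"
proof -
  have 1: "a + b + c = 0" using assms[of 1] by simp
  have 2: "a - b + c = 0" using assms[of "-1"] by simp
  have 3: "a + b*\<i> - c = 0" using assms[of "\<i>"] by (simp add: power2_eq_square)
  have "2*b = (a+b+c) - (a-b+c)" by (simp add: algebra_simps)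
  then have b: "b = 0" using 1 2 by simp
  have "2*a = (a+b+c) + (a+b*\<i>-c)" using b by (simp add: algebra_simps)
  then have a: "a = 0" using 1 3 by simp
  show ?thesis using a b 1 by simp
qed


lemma bivar: fixes a0 a1 a2 b0 b1 b2 c0 c1 c2 :: complex
  assumes "\<And>x y. x \<in> {1,-1,\<i>} \<Longrightarrow> y \<in> {1,-1,\<i>} \<Longrightarrow>
     (a0 + a1*y + a2*y^2) + (b0 + b1*y + b2*y^2)*x + (c0 + c1*y + c2*y^2)*x^2 = 0"
  shows "a0 = 0 \<and> a1 = 0 \<and> a2 = 0 \<and> b0 = 0 \<and> b1 = 0 \<and> b2 = 0 \<and> c0 = 0 \<and> c1 = 0 \<and> c2 = 0"
proof -
  have h: "a0 + a1*y + a2*y^2 = 0 \<and> b0 + b1*y + b2*y^2 = 0 \<and> c0 + c1*y + c2*y^2 = 0"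
    if "y \<in> {1,-1,\<i>}" for y
    by (rule V3) (use assms that in auto)
  have "a0 = 0 \<and> a1 = 0 \<and> a2 = 0" by (rule V3) (use h in auto)
  moreover have "b0 = 0 \<and> b1 = 0 \<and> b2 = 0" by (rule V3) (use h in auto)
  moreover have "c0 = 0 \<and> c1 = 0 \<and> c2 = 0" by (rule V3) (use h in auto)
  ultimately show ?thesis by blast
qed

lemma key1:
  assumes "\<And>a b c. F1 a b c = 0 \<Longrightarrow> hpoly p a b c = 0"
  shows "\<exists>k. \<forall>a b c. hpoly p a b c = k * F1 a b c"
proof -
  have "p 0 0 0 = 0 \<and> p 0 1 0 = 0 \<and> (0::complex) = 0 \<and> p 1 0 0 = 0 \<and> p 1 1 0 - p 0 0 1 = 0 \<and> - p 0 1 1 = 0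
     \<and> (0::complex) = 0 \<and> - p 1 0 1 = 0 \<and> - p 1 1 1 = 0"
  proof (rule bivar)
    fix x y :: complex assume "x \<in> {1,-1,\<i>}" "y \<in> {1,-1,\<i>}"
    then obtain s t :: real where x: "exp (\<i> * s) = x" and y: "exp (\<i> * t) = y"
      using ang by metis
    have z: "exp (\<i> * complex_of_real (s + t + pi)) = - (x*y)"
      using x y by (simp add: distrib_left exp_add flip: cis_conv_exp)
    have "F1 s t (s + t + pi) = 0"
      using x y z unfolding F1_def by (simp add: distrib_left exp_add)
    then have "hpoly p s t (s + t + pi) = 0" by (rule assms)
    then show "(p 0 0 0 + p 0 1 0*y + 0*y^2) + (p 1 0 0 + (p 1 1 0 - p 0 0 1)*y + (- p 0 1 1)*y^2)*x
        + (0 + (- p 1 0 1)*y + (- p 1 1 1)*y^2)*x^2 = 0"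
      unfolding hpoly_alt x y z by (simp add: algebra_simps power2_eq_square)
  qed
  then have "\<forall>a b c. hpoly p a b c = p 0 0 1 * F1 a b c"
    by (simp add: hpoly_alt F1_def distrib_left exp_add algebra_simps)
  then show ?thesis by blast
qed

lemma key2:
  assumes "\<And>a b c. F2 a b c = 0 \<Longrightarrow> hpoly p a b c = 0"
  shows "\<exists>k. \<forall>a b c. hpoly p a b c = k * F2 a b c"
proof -
  have "p 0 0 0 = 0 \<and> p 0 0 1 = 0 \<and> (0::complex) = 0 \<and> p 1 0 0 = 0 \<and> p 0 1 0 + p 1 0 1 = 0 \<and> p 0 1 1 = 0
     \<and> (0::complex) = 0 \<and> p 1 1 0 = 0 \<and> p 1 1 1 = 0"
  proof (rule bivar)
    fix x y :: complex assume "x \<in> {1,-1,\<i>}" "y \<in> {1,-1,\<i>}"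
    then obtain s t :: real where x: "exp (\<i> * s) = x" and y: "exp (\<i> * t) = y"
      using ang by metis
    have z: "exp (\<i> * complex_of_real (s + t)) = x*y"
      using x y by (simp add: distrib_left exp_add)
    have "F2 s (s + t) t = 0"
      using x y z unfolding F2_def by (simp add: distrib_left exp_add)
    then have "hpoly p s (s + t) t = 0" by (rule assms)
    then show "(p 0 0 0 + p 0 0 1*y + 0*y^2) + (p 1 0 0 + (p 0 1 0 + p 1 0 1)*y + (p 0 1 1)*y^2)*x
        + (0 + (p 1 1 0)*y + (p 1 1 1)*y^2)*x^2 = 0"
      unfolding hpoly_alt x y z by (simp add: algebra_simps power2_eq_square)
  qed
  then have "\<forall>a b c. hpoly p a b c = p 1 0 1 * F2 a b c"
    by (simp add: hpoly_alt F2_def distrib_left exp_add algebra_simps add_eq_0_iff)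
  then show ?thesis by blast
qed

lemma key3:
  assumes "\<And>a b c. F3 a b c = 0 \<Longrightarrow> hpoly p a b c = 0"
  shows "\<exists>k. \<forall>a b c. hpoly p a b c = k * F3 a b c"
proof -
  have "p 0 0 0 = 0 \<and> p 0 0 1 = 0 \<and> (0::complex) = 0 \<and> p 0 1 0 = 0 \<and> p 1 0 0 + p 0 1 1 = 0 \<and> p 1 0 1 = 0
     \<and> (0::complex) = 0 \<and> p 1 1 0 = 0 \<and> p 1 1 1 = 0"
  proof (rule bivar)
    fix x y :: complex assume "x \<in> {1,-1,\<i>}" "y \<in> {1,-1,\<i>}"
    then obtain s t :: real where x: "exp (\<i> * s) = x" and y: "exp (\<i> * t) = y"
      using ang by metis
    have z: "exp (\<i> * complex_of_real (s + t)) = x*y"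
      using x y by (simp add: distrib_left exp_add)
    have "F3 (s + t) s t = 0"
      using x y z unfolding F3_def by (simp add: distrib_left exp_add)
    then have "hpoly p (s + t) s t = 0" by (rule assms)
    then show "(p 0 0 0 + p 0 0 1*y + 0*y^2) + (p 0 1 0 + (p 1 0 0 + p 0 1 1)*y + (p 1 0 1)*y^2)*x
        + (0 + (p 1 1 0)*y + (p 1 1 1)*y^2)*x^2 = 0"
      unfolding hpoly_alt x y z by (simp add: algebra_simps power2_eq_square)
  qed
  then have "\<forall>a b c. hpoly p a b c = p 0 1 1 * F3 a b c"
    by (simp add: hpoly_alt F3_def distrib_left exp_add algebra_simps add_eq_0_iff)
  then show ?thesis by blast
qed

lemma key4:
  assumes "\<And>a b c. F4 a b c = 0 \<Longrightarrow> hpoly p a b c = 0"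
  shows "\<exists>k. \<forall>a b c. hpoly p a b c = k * F4 a b c"
proof -
  have "p 0 0 1 = 0 \<and> p 0 1 1 = 0 \<and> (0::complex) = 0 \<and> p 1 0 1 = 0 \<and> p 0 0 0 + p 1 1 1 = 0 \<and> p 0 1 0 = 0
     \<and> (0::complex) = 0 \<and> p 1 0 0 = 0 \<and> p 1 1 0 = 0"
  proof (rule bivar)
    fix x y :: complex assume "x \<in> {1,-1,\<i>}" "y \<in> {1,-1,\<i>}"
    then obtain s t :: real where x: "exp (\<i> * s) = x" and y: "exp (\<i> * t) = y"
      using ang by metis
    define z where "z = exp (\<i> * complex_of_real (- (s + t)))"
    have xyz: "x * y * z = 1"
    proof -
      have "x * y * z = exp (\<i> * s + \<i> * t + \<i> * complex_of_real (- (s + t)))"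
        unfolding x[symmetric] y[symmetric] z_def by (simp only: exp_add)
      also have "\<dots> = 1" by (simp add: algebra_simps)
      finally show ?thesis .
    qed
    have "F4 s t (- (s + t)) = 0"
      unfolding F4_def by simp
    then have "hpoly p s t (- (s + t)) = 0" by (rule assms)
    then have P: "p 0 0 0 + p 1 0 0 * x + p 0 1 0 * y + p 0 0 1 * z + p 1 1 0 * x * y + p 1 0 1 * x * z
        + p 0 1 1 * y * z + p 1 1 1 * x * y * z = 0"
      unfolding hpoly_alt x y z_def by simp
    have "x * y * (p 0 0 0 + p 1 0 0 * x + p 0 1 0 * y + p 0 0 1 * z + p 1 1 0 * x * y + p 1 0 1 * x * z
        + p 0 1 1 * y * z + p 1 1 1 * x * y * z) = (p 0 0 1 + p 0 1 1*y + 0*y^2) + (p 1 0 1 + (p 0 0 0 + p 1 1 1)*y + (p 0 1 0)*y^2)*x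
        + (0 + (p 1 0 0)*y + (p 1 1 0)*y^2)*x^2 + (x*y*z - 1) * (p 0 0 1 + p 1 0 1 * x + p 0 1 1 * y + p 1 1 1 * x * y)"
      by (simp add: algebra_simps power2_eq_square)
    then show "(p 0 0 1 + p 0 1 1*y + 0*y^2) + (p 1 0 1 + (p 0 0 0 + p 1 1 1)*y + (p 0 1 0)*y^2)*x
        + (0 + (p 1 0 0)*y + (p 1 1 0)*y^2)*x^2 = 0"
      using P xyz by simp
  qed
  then have "\<forall>a b c. hpoly p a b c = p 1 1 1 * F4 a b c"
    by (simp add: hpoly_alt F4_def distrib_left exp_add algebra_simps add_eq_0_iff)
  then show ?thesis by blast
qed


lemma Q111_nonneg: "g \<in> Q111 \<Longrightarrow> g a b c \<ge> 0"
  unfolding Q111_def by (auto intro: sum_nonneg)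

lemma aux:
  fixes F :: "real \<Rightarrow> real \<Rightarrow> real \<Rightarrow> complex"
  assumes key: "\<And>p. (\<And>a b c. F a b c = 0 \<Longrightarrow> hpoly p a b c = 0) \<Longrightarrow> \<exists>k. \<forall>a b c. hpoly p a b c = k * F a b c"
    and g: "g \<in> Q111" and h: "h \<in> Q111"
    and fgh: "(\<lambda>a b c. (cmod (F a b c))\<^sup>2) = (\<lambda>a b c. g a b c + h a b c)"
  shows "\<exists>d\<ge>0. g = (\<lambda>a b c. d * (cmod (F a b c))\<^sup>2)"
proof -
  obtain r :: nat and ps where gdef: "g = (\<lambda>a b c. \<Sum>j<r. (cmod (hpoly (ps j) a b c))\<^sup>2)"
    using g unfolding Q111_def mem_Collect_eq by blast
  have "\<forall>j. \<exists>k. j < r \<longrightarrow> (\<forall>a b c. hpoly (ps j) a b c = k * F a b c)"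
  proof (intro allI)
    fix j
    show "\<exists>k. j < r \<longrightarrow> (\<forall>a b c. hpoly (ps j) a b c = k * F a b c)"
    proof (cases "j < r")
      case True
      have "\<exists>k. \<forall>a b c. hpoly (ps j) a b c = k * F a b c"
      proof (rule key)
        fix a b c assume F0: "F a b c = 0"
        have "g a b c + h a b c = 0" using fun_cong[OF fun_cong[OF fun_cong[OF fgh, of a], of b], of c] F0 by simp
        moreover have "g a b c \<ge> 0" "h a b c \<ge> 0" using Q111_nonneg g h by auto
        ultimately have "g a b c = 0" by simp
        then have "(\<Sum>j<r. (cmod (hpoly (ps j) a b c))\<^sup>2) = 0" unfolding gdef by simp
        then have "\<forall>j\<in>{..<r}. (cmod (hpoly (ps j) a b c))\<^sup>2 = 0"
          by (subst sum_nonneg_eq_0_iff[symmetric]) auto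
        then show "hpoly (ps j) a b c = 0" using True by simp
      qed
      then show ?thesis by blast
    qed simp
  qed
  then obtain k where k: "\<And>j a b c. j < r \<Longrightarrow> hpoly (ps j) a b c = k j * F a b c" by metis
  have "g = (\<lambda>a b c. (\<Sum>j<r. (cmod (k j))\<^sup>2) * (cmod (F a b c))\<^sup>2)"
    unfolding gdef by (intro ext) (simp add: k norm_mult power_mult_distrib sum_distrib_right)
  moreover have "(\<Sum>j<r. (cmod (k j))\<^sup>2) \<ge> 0" by (intro sum_nonneg) auto
  ultimately show ?thesis by blast
qed

lemma generic:
  fixes F :: "real \<Rightarrow> real \<Rightarrow> real \<Rightarrow> complex"
  assumes rep: "\<And>a b c. F a b c = hpoly q a b c"
    and key: "\<And>p. (\<And>a b c. F a b c = 0 \<Longrightarrow> hpoly p a b c = 0) \<Longrightarrow> \<exists>k. \<forall>a b c. hpoly p a b c = k * F a b c"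
  shows "extremal_in (\<lambda>a b c. (cmod (F a b c))\<^sup>2) Q111"
  unfolding extremal_in_def
proof (intro conjI ballI impI)
  show "(\<lambda>a b c. (cmod (F a b c))\<^sup>2) \<in> Q111"
    unfolding Q111_def
    by (rule CollectI, rule exI[of _ 1], rule exI[of _ "\<lambda>_. q"]) (simp add: rep)
next
  fix g h assume g: "g \<in> Q111" and h: "h \<in> Q111"
    and fgh: "(\<lambda>a b c. (cmod (F a b c))\<^sup>2) = (\<lambda>a b c. g a b c + h a b c)"
  show "\<exists>c\<ge>0. g = (\<lambda>a b ca. c * (cmod (F a b ca))\<^sup>2)"
    by (rule aux[OF key g h fgh])
  have fhg: "(\<lambda>a b c. (cmod (F a b c))\<^sup>2) = (\<lambda>a b c. h a b c + g a b c)"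
    using fgh by (simp add: add.commute)
  show "\<exists>d\<ge>0. h = (\<lambda>a b c. d * (cmod (F a b c))\<^sup>2)"
    by (rule aux[OF key h g fhg])
qed

lemma rep1: "F1 a b c = hpoly (\<lambda>k l m. if (k,l,m) = (1,1,0) \<or> (k,l,m) = (0,0,1) then 1 else 0) a b c"
  by (simp add: hpoly_alt F1_def distrib_left exp_add)
lemma rep2: "F2 a b c = hpoly (\<lambda>k l m. if (k,l,m) = (1,0,1) then 1 else if (k,l,m) = (0,1,0) then -1 else 0) a b c"
  by (simp add: hpoly_alt F2_def distrib_left exp_add)
lemma rep3: "F3 a b c = hpoly (\<lambda>k l m. if (k,l,m) = (0,1,1) then 1 else if (k,l,m) = (1,0,0) then -1 else 0) a b c"
  by (simp add: hpoly_alt F3_def distrib_left exp_add)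
lemma rep4: "F4 a b c = hpoly (\<lambda>k l m. if (k,l,m) = (1,1,1) then 1 else if (k,l,m) = (0,0,0) then -1 else 0) a b c"
  by (simp add: hpoly_alt F4_def distrib_left exp_add)

theorem proposition3:
  shows "\<forall>F\<in>{F1, F2, F3, F4}.
           extremal_in (\<lambda>\<alpha> \<beta> \<gamma>. (cmod (F \<alpha> \<beta> \<gamma>))\<^sup>2) Q111"
  using generic[OF rep1 key1] generic[OF rep2 key2] generic[OF rep3 key3] generic[OF rep4 key4]
  by blast

end
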